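(* Let $G$ be a locally compact second countable group, $\rho_0,\rho_1:G\to\mathrm{Homeo}^+(S^1)$ continuous actions, and $\varphi:S^1\to S^1$ a covering map of degree $k$ such that $\rho_0(g)\varphi=\varphi\rho_1(g)$ for all $g\in G$. Then $\rho_0^*(e^b)=k\,\rho_1^*(e^b)$ in $H^2_{bc}(G,\mathbb Z)$.
   Context: $S^1=\mathbb Z\backslash\mathbb R$. For $f\in\mathrm{Homeo}^+(S^1)$ let $\bar f$ be its lift with $\bar f(0)\in[0,1)$, $T(x)=x+1$, and define the Euler cocycle $c(f,g)\in\{0,1\}$ by $\overline{fg}\,T^{c(f,g)}=\bar f\bar g$. $H^2_{bc}(G,\mathbb Z)$ is the cohomology of $G$ computed with bounded Borel $\mathbb Z$-valued cochains, and for a continuous action $\rho$, $\rho^*(e^b)\in H^2_{bc}(G,\mathbb Z)$ is the class of the bounded Borel cocycle $(g,h)\mapsto c(\rho(g),\rho(h))$. *)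

theory Defs
  imports "HOL-Analysis.Analysis"
begin

text \<open>The circle S^1 = Z\R, realised as the unit circle in the complex plane;
  the covering projection R -> S^1 is x |-> exp(2 pi i x).\<close>

abbreviation S1 :: "complex set" where "S1 \<equiv> sphere 0 1"

definition ecirc :: "real \<Rightarrow> complex" where
  "ecirc x = cis (2 * pi * x)"

definition circle_degree :: "(complex \<Rightarrow> complex) \<Rightarrow> int" where
  "circle_degree f = (THE k::int. \<exists>F. continuous_on UNIV F \<and>
      (\<forall>x. f (ecirc x) = ecirc (F x)) \<and> (\<forall>x. F (x + 1) = F x + of_int k))"

definition homeo_plus :: "(complex \<Rightarrow> complex) \<Rightarrow> bool" where
  "homeo_plus f \<longleftrightarrow> (\<exists>f'. homeomorphism S1 S1 f f') \<and> circle_degree f = 1"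

definition circle_lift :: "(complex \<Rightarrow> complex) \<Rightarrow> real \<Rightarrow> real" where
  "circle_lift f = (THE F. continuous_on UNIV F \<and>
      (\<forall>x. f (ecirc x) = ecirc (F x)) \<and> 0 \<le> F 0 \<and> F 0 < 1)"

definition euler_cocycle :: "(complex \<Rightarrow> complex) \<Rightarrow> (complex \<Rightarrow> complex) \<Rightarrow> int" where
  "euler_cocycle f g = (THE c::int. \<forall>x.
      circle_lift (f \<circ> g) (x + of_int c) = circle_lift f (circle_lift g x))"

text \<open>Continuous action of the topological group G (written additively) on S^1
  by orientation preserving homeomorphisms.\<close>
definition cont_action :: "('g::topological_group_add \<Rightarrow> complex \<Rightarrow> complex) \<Rightarrow> bool" where
  "cont_action \<rho> \<longleftrightarrow> (\<forall>g. homeo_plus (\<rho> g)) \<and>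
     (\<forall>g h. \<forall>x\<in>S1. \<rho> (g + h) x = \<rho> g (\<rho> h x)) \<and>
     continuous_on (UNIV \<times> S1) (\<lambda>(g, x). \<rho> g x)"

definition bounded_borel_int :: "('g::topological_space \<Rightarrow> int) \<Rightarrow> bool" where
  "bounded_borel_int b \<longleftrightarrow> (\<lambda>g. real_of_int (b g)) \<in> borel_measurable borel \<and>
     (\<exists>B. \<forall>g. \<bar>b g\<bar> \<le> B)"

text \<open>Equality of the classes of two 2-cocycles in H^2_bc(G,Z): their difference
  is the coboundary (delta b)(g,h) = b(g) + b(h) - b(gh) of a bounded Borel 1-cochain.\<close>
definition same_bc_class :: "('g::topological_group_add \<Rightarrow> 'g \<Rightarrow> int) \<Rightarrow> ('g \<Rightarrow> 'g \<Rightarrow> int) \<Rightarrow> bool" where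
  "same_bc_class c c' \<longleftrightarrow> (\<exists>b. bounded_borel_int b \<and>
     (\<forall>g h. c g h - c' g h = b g + b h - b (g + h)))"

text \<open>rho^*(e^b) is represented by (g,h) |-> c(rho g, rho h).\<close>
definition pullback_euler :: "('g \<Rightarrow> complex \<Rightarrow> complex) \<Rightarrow> 'g \<Rightarrow> 'g \<Rightarrow> int" where
  "pullback_euler \<rho> g h = euler_cocycle (\<rho> g) (\<rho> h)"

end

theory Submission
  imports Defs
begin


lemma ecirc_exp: "ecirc x = exp (\<i> * of_real (2*pi*x))"
  by (simp add: ecirc_def cis_conv_exp)

lemma ecirc_in: "ecirc x \<in> S1"
  by (simp add: ecirc_def)

lemma cont_ecirc: "continuous_on UNIV ecirc"
  unfolding ecirc_exp[abs_def] by (intro continuous_intros)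

lemma ecirc_eq_iff: "ecirc a = ecirc b \<longleftrightarrow> (\<exists>n::int. a = b + of_int n)"
proof -
  have *: "(\<i> * of_real (2*pi*a) = \<i> * of_real (2*pi*b) + (of_int (2 * n) * pi) * \<i>) \<longleftrightarrow> a = b + of_int n" for n :: int
  proof -
    have "(\<i> * of_real (2*pi*a) = \<i> * of_real (2*pi*b) + (of_int (2 * n) * pi) * \<i>) \<longleftrightarrow>
          complex_of_real (2*pi*a) * \<i> = complex_of_real (2*pi*b + 2*n*pi) * \<i>"
      by (simp add: algebra_simps)
    also have "\<dots> \<longleftrightarrow> 2*pi*a = 2*pi*b + 2*n*pi"
      by (metis complex_i_not_zero mult_cancel_right of_real_eq_iff)
    also have "\<dots> \<longleftrightarrow> 2*pi*a = 2*pi*(b + of_int n)"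
      by (simp add: algebra_simps)
    also have "\<dots> \<longleftrightarrow> a = b + of_int n"
      using pi_gt_zero by simp
    finally show ?thesis .
  qed
  show ?thesis unfolding ecirc_exp exp_eq using * by blast
qed

lemma ecirc_add_int: "ecirc (x + of_int n) = ecirc x"
  using ecirc_eq_iff by blast

lemma ecirc_0: "ecirc 0 = 1" by (simp add: ecirc_def)

definition islift :: "(complex \<Rightarrow> complex) \<Rightarrow> (real \<Rightarrow> real) \<Rightarrow> bool" where
  "islift f F \<longleftrightarrow> continuous_on UNIV F \<and> (\<forall>x. f (ecirc x) = ecirc (F x))"

lemma int_valued_const:
  fixes h :: "real \<Rightarrow> real"
  assumes "continuous_on UNIV h" "\<And>x. \<exists>n::int. h x = of_int n"
  shows "\<exists>n::int. \<forall>x. h x = of_int n"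
proof -
  have "h constant_on UNIV"
  proof (rule continuous_discrete_range_constant[OF connected_UNIV assms(1)])
    fix x :: real
    show "\<exists>e>0. \<forall>y. y \<in> UNIV \<and> h y \<noteq> h x \<longrightarrow> e \<le> norm (h y - h x)"
    proof (intro exI[of _ 1] conjI allI impI)
      fix y assume "y \<in> UNIV \<and> h y \<noteq> h x"
      moreover obtain n m :: int where "h x = n" "h y = m" using assms(2) by metis
      ultimately have "n \<noteq> m" by auto
      then have "1 \<le> \<bar>m - n\<bar>" by linarith
      then show "1 \<le> norm (h y - h x)" using \<open>h x = n\<close> \<open>h y = m\<close>
        by (metis of_int_1_le_iff of_int_abs of_int_diff real_norm_def)
    qed simp
  qed
  then obtain c where c: "\<And>x. h x = c" unfolding constant_on_def by auto
  obtain n :: int where "h 0 = n" using assms(2) by blast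
  then show ?thesis using c by metis
qed

lemma lift_diff:
  assumes "islift f F" "islift f G"
  shows "\<exists>n::int. \<forall>x. G x = F x + of_int n"
proof -
  have "\<exists>n::int. \<forall>x. G x - F x = of_int n"
  proof (rule int_valued_const)
    show "continuous_on UNIV (\<lambda>x. G x - F x)"
      using assms unfolding islift_def by (intro continuous_intros) auto
    fix x
    have "ecirc (G x) = ecirc (F x)" using assms unfolding islift_def by metis
    then obtain n :: int where "G x = F x + n" using ecirc_eq_iff by blast
    then show "\<exists>n::int. G x - F x = of_int n" by (intro exI[of _ n]) simp
  qed
  then show ?thesis by (metis add.commute diff_eq_eq)
qed

lemma lift_period:
  assumes "islift f F"
  shows "\<exists>d::int. \<forall>x. F (x + 1) = F x + of_int d"
proof -
  have cF: "continuous_on UNIV F" using assms islift_def by blast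
  have "\<exists>n::int. \<forall>x. F (x + 1) - F x = of_int n"
  proof (rule int_valued_const)
    have "continuous_on UNIV (\<lambda>x. F (x + 1))"
      by (rule continuous_on_compose2[OF cF]) (auto intro: continuous_intros)
    then show "continuous_on UNIV (\<lambda>x. F (x + 1) - F x)"
      using cF by (intro continuous_intros)
    fix x
    have "ecirc (F (x + 1)) = ecirc (F x)" using assms unfolding islift_def
      by (metis ecirc_add_int of_int_1)
    then obtain n :: int where "F (x+1) = F x + n" using ecirc_eq_iff by blast
    then show "\<exists>n::int. F (x+1) - F x = of_int n" by (intro exI[of _ n]) simp
  qed
  then show ?thesis by (metis add.commute diff_eq_eq)
qed

lemma lift_exists:
  assumes "continuous_on S1 f" "f ` S1 \<subseteq> S1"
  shows "\<exists>F. islift f F"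
proof -
  have cq: "continuous_on UNIV (\<lambda>x. f (ecirc x))"
    by (rule continuous_on_compose2[OF assms(1) cont_ecirc]) (auto simp: ecirc_in ecirc_def)
  have n1: "norm (f (ecirc x)) = 1" for x
  proof -
    have "f (ecirc x) \<in> S1" using assms(2) ecirc_in by blast
    then show ?thesis by simp
  qed
  obtain g where g: "continuous_on UNIV g" "\<And>x. f (ecirc x) = exp (g x)"
  proof -
    have nz: "\<And>z. z \<in> UNIV \<Longrightarrow> f (ecirc z) \<noteq> 0" using n1 by (metis norm_zero zero_neq_one)
    show thesis
      using continuous_logarithm_on_contractible[OF cq contractible_UNIV nz] that by (metis UNIV_I)
  qed
  have re: "Re (g x) = 0" for x using n1[of x] g(2)[of x] by (simp add: norm_exp_eq_Re)
  define F where "F x = Im (g x) / (2*pi)" for x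
  have "islift f F"
    unfolding islift_def
  proof
    show "continuous_on UNIV F" unfolding F_def[abs_def] using g(1) by (intro continuous_intros) auto
    show "\<forall>x. f (ecirc x) = ecirc (F x)"
    proof
      fix x
      have "g x = \<i> * of_real (Im (g x))" using re[of x] by (simp add: complex_eq_iff)
      moreover have "ecirc (F x) = exp (\<i> * of_real (Im (g x)))" by (simp add: ecirc_exp F_def)
      ultimately show "f (ecirc x) = ecirc (F x)" using g(2)[of x] by simp
    qed
  qed
  then show ?thesis by blast
qed



lemma lift_degree:
  assumes "islift f F"
  shows "F (x + 1) = F x + of_int (circle_degree f)"
proof -
  obtain d :: int where d: "\<And>x. F (x + 1) = F x + of_int d" using lift_period[OF assms] by blast
  have "circle_degree f = d"
    unfolding circle_degree_def
  proof (rule the_equality)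
    show "\<exists>F. continuous_on UNIV F \<and> (\<forall>x. f (ecirc x) = ecirc (F x)) \<and> (\<forall>x. F (x + 1) = F x + of_int d)"
      using assms d unfolding islift_def by blast
  next
    fix k :: int
    assume "\<exists>G. continuous_on UNIV G \<and> (\<forall>x. f (ecirc x) = ecirc (G x)) \<and> (\<forall>x. G (x + 1) = G x + of_int k)"
    then obtain G where G: "islift f G" "\<And>x. G (x + 1) = G x + of_int k" unfolding islift_def by blast
    obtain n :: int where n: "\<And>x. G x = F x + of_int n" using lift_diff[OF assms G(1)] by blast
    have "of_int k = (of_int d :: real)" using G(2)[of 0] d[of 0] n[of 0] n[of 1] by simp
    then show "k = d" by simp
  qed
  then show ?thesis using d by simp
qed

lemma shift_int:
  fixes F :: "real \<Rightarrow> real"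
  assumes "\<And>x. F (x + 1) = F x + of_int d"
  shows "F (x + of_int c) = F x + of_int d * of_int c"
proof -
  have nat: "F (y + real n) = F y + of_int d * real n" for y n
  proof (induction n)
    case 0 then show ?case by simp
  next
    case (Suc n)
    have "F (y + real (Suc n)) = F ((y + real n) + 1)" by (simp add: algebra_simps)
    also have "\<dots> = F (y + real n) + of_int d" by (rule assms)
    finally show ?case using Suc.IH by (simp add: algebra_simps)
  qed
  show ?thesis
  proof (cases "c \<ge> 0")
    case True
    then obtain n where "c = int n" by (metis nonneg_eq_int)
    then show ?thesis using nat[of x n] by simp
  next
    case False
    have "\<exists>n. c = - int n" using False by (intro exI[of _ "nat (-c)"]) simp
    then obtain n where n: "c = - int n" by blast
    have "F (x - real n + real n) = F (x - real n) + of_int d * real n" by (rule nat)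
    then show ?thesis using n by simp
  qed
qed

definition good :: "(complex \<Rightarrow> complex) \<Rightarrow> bool" where
  "good f \<longleftrightarrow> continuous_on S1 f \<and> f ` S1 \<subseteq> S1"

lemma circle_lift_unique:
  assumes "islift f F" "0 \<le> F 0" "F 0 < 1"
  shows "circle_lift f = F"
  unfolding circle_lift_def
proof (rule the_equality)
  show "continuous_on UNIV F \<and> (\<forall>x. f (ecirc x) = ecirc (F x)) \<and> 0 \<le> F 0 \<and> F 0 < 1"
    using assms islift_def by blast
next
  fix G assume "continuous_on UNIV G \<and> (\<forall>x. f (ecirc x) = ecirc (G x)) \<and> 0 \<le> G 0 \<and> G 0 < 1"
  then have G: "islift f G" "0 \<le> G 0" "G 0 < 1" unfolding islift_def by auto
  obtain n :: int where n: "\<And>x. G x = F x + of_int n" using lift_diff[OF assms(1) G(1)] by blast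
  have "of_int n > (-1::real)" "of_int n < (1::real)" using n[of 0] G assms by auto
  then have "n = 0" by linarith
  then show "G = F" using n by auto
qed

lemma circle_lift_props:
  assumes "good f"
  shows "islift f (circle_lift f)" "0 \<le> circle_lift f 0" "circle_lift f 0 < 1"
proof -
  obtain F0 where F0: "islift f F0" using lift_exists assms good_def by blast
  define F where "F x = F0 x - of_int \<lfloor>F0 0\<rfloor>" for x
  have "islift f F" using F0 unfolding islift_def F_def
    by (auto intro!: continuous_intros simp: ecirc_add_int[of _ "- \<lfloor>F0 0\<rfloor>", simplified])
  moreover have "0 \<le> F 0" "F 0 < 1" unfolding F_def by linarith+
  ultimately have "circle_lift f = F" by (rule circle_lift_unique)
  then show "islift f (circle_lift f)" "0 \<le> circle_lift f 0" "circle_lift f 0 < 1"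
    using \<open>islift f F\<close> \<open>0 \<le> F 0\<close> \<open>F 0 < 1\<close> by auto
qed

lemma circle_lift_cong:
  assumes "\<And>z. z \<in> S1 \<Longrightarrow> f z = h z"
  shows "circle_lift f = circle_lift h"
proof -
  have "(\<lambda>x. f (ecirc x)) = (\<lambda>x. h (ecirc x))" using assms ecirc_in by auto
  then show ?thesis unfolding circle_lift_def by (metis (no_types))
qed

lemma homeo_plus_props:
  assumes "homeo_plus f"
  shows "good f" "inj_on f S1" "circle_degree f = 1"
proof -
  obtain f' where h: "homeomorphism S1 S1 f f'" "circle_degree f = 1" using assms homeo_plus_def by blast
  then show "good f" unfolding good_def homeomorphism_def by auto
  show "inj_on f S1" using h(1) unfolding homeomorphism_def by (metis inj_on_inverseI)
  show "circle_degree f = 1" by fact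
qed

lemma cl_shift:
  assumes "homeo_plus f"
  shows "circle_lift f (x + of_int c) = circle_lift f x + of_int c"
  using shift_int[of "circle_lift f" 1 x c] lift_degree[OF circle_lift_props(1)[OF homeo_plus_props(1)[OF assms]]]
    homeo_plus_props(3)[OF assms] by simp

lemma cl_bound:
  assumes "homeo_plus f" "0 \<le> x" "x < 1"
  shows "circle_lift f 0 \<le> circle_lift f x \<and> circle_lift f x < circle_lift f 0 + 1"
proof -
  let ?F = "circle_lift f"
  have L: "islift f ?F" using circle_lift_props(1)[OF homeo_plus_props(1)[OF assms(1)]] .
  have cF: "continuous_on A ?F" for A using L islift_def continuous_on_subset by blast
  have F1: "?F 1 = ?F 0 + 1" using cl_shift[OF assms(1), of 0 1] by simp
  have noint: "?F y \<noteq> ?F 0 + of_int n" if "0 < y" "y < 1" for y n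
  proof
    assume "?F y = ?F 0 + of_int n"
    then have "ecirc (?F y) = ecirc (?F 0)" by (simp add: ecirc_add_int)
    then have "f (ecirc y) = f (ecirc 0)" using L islift_def by metis
    then have "ecirc y = ecirc 0" using homeo_plus_props(2)[OF assms(1)] ecirc_in
      by (metis inj_onD)
    then obtain m :: int where "y = of_int m" using ecirc_eq_iff by auto
    with that have "0 < m" "m < 1" by auto
    then show False by simp
  qed
  show ?thesis
  proof (cases "x = 0")
    case True then show ?thesis by simp
  next
    case False
    then have x0: "0 < x" using assms by simp
    have a: "?F 0 \<le> ?F x"
    proof (rule ccontr)
      assume "\<not> ?thesis"
      then obtain y where y: "x \<le> y" "y \<le> 1" "?F y = ?F 0"
        using IVT'[of ?F x "?F 0" 1, OF _ _ _ cF] F1 assms by force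
      have "y \<noteq> 1" using y F1 by auto
      then show False using noint[of y 0] y x0 by simp
    qed
    have b: "?F x < ?F 0 + 1"
    proof (rule ccontr)
      assume "\<not> ?thesis"
      moreover have "?F x \<noteq> ?F 0 + 1" using noint[of x 1] x0 assms by simp
      ultimately have "?F 0 + 1 \<le> ?F x" by simp
      then obtain y where y: "0 \<le> y" "y \<le> x" "?F y = ?F 0 + 1"
        using IVT'[of ?F 0 "?F 0 + 1" x, OF _ _ _ cF] assms by force
      have "y \<noteq> 0" using y by auto
      then show False using noint[of y 1] y assms by simp
    qed
    show ?thesis using a b by simp
  qed
qed



definition ang :: "complex \<Rightarrow> real" where "ang z = Arg2pi z / (2*pi)"

lemma ang_props:
  assumes "z \<in> S1"
  shows "0 \<le> ang z" "ang z < 1" "ecirc (ang z) = z"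
proof -
  show "0 \<le> ang z" unfolding ang_def using Arg2pi_ge_0[of z] by simp
  show "ang z < 1" unfolding ang_def using Arg2pi_lt_2pi[of z] by simp
  have "norm z = 1" using assms by simp
  then have "exp (\<i> * of_real (Arg2pi z)) = z" using complex_norm_eq_1_exp by blast
  then show "ecirc (ang z) = z" unfolding ang_def ecirc_exp by simp
qed

lemma ang_ecirc:
  assumes "0 \<le> x" "x < 1"
  shows "ang (ecirc x) = x"
proof -
  have "Arg2pi (ecirc x) = 2*pi*x"
    by (rule Arg2pi_unique[of 1]) (use assms in \<open>auto simp: ecirc_exp\<close>)
  then show ?thesis unfolding ang_def by simp
qed

lemma ang_meas: "ang \<in> borel_measurable borel"
proof (rule borel_measurableI_greater)
  fix y
  have "{x \<in> space borel. y < ang x} = {z. 2*pi*y < Arg2pi z}"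
    unfolding ang_def by (auto simp: field_simps)
  then show "{x \<in> space borel. y < ang x} \<in> sets borel"
    using open_Arg2pi2pi_gt by simp
qed

lemma lift0:
  assumes "good f"
  shows "circle_lift f 0 = ang (f 1)"
proof -
  have "f 1 = ecirc (circle_lift f 0)" using circle_lift_props(1)[OF assms] ecirc_0
    unfolding islift_def by metis
  then show ?thesis using ang_ecirc circle_lift_props(2,3)[OF assms] by simp
qed

lemma lift_t:
  assumes "homeo_plus f" "0 \<le> t" "t < 1"
  shows "circle_lift f t = (if ang (f 1) \<le> ang (f (ecirc t)) then ang (f (ecirc t)) else ang (f (ecirc t)) + 1)"
proof -
  have gf: "good f" using homeo_plus_props(1)[OF assms(1)] .
  let ?F = "circle_lift f"
  define a where "a = ang (f (ecirc t))"
  define a0 where "a0 = ang (f 1)"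
  have fin: "f (ecirc t) \<in> S1" using gf ecirc_in unfolding good_def by blast
  have a: "0 \<le> a" "a < 1" "ecirc a = f (ecirc t)" using ang_props[OF fin] a_def by auto
  have F0: "?F 0 = a0" using lift0[OF gf] a0_def by simp
  have bd: "a0 \<le> ?F t" "?F t < a0 + 1" using cl_bound[OF assms] F0 by auto
  have "ecirc (?F t) = ecirc a" using a(3) circle_lift_props(1)[OF gf] unfolding islift_def by metis
  then obtain m :: int where m: "?F t = a + of_int m" using ecirc_eq_iff by blast
  have a0b: "0 \<le> a0" "a0 < 1" using F0 circle_lift_props(2,3)[OF gf] by auto
  show ?thesis
  proof (cases "a0 \<le> a")
    case True
    then have "of_int m < (1::real)" "of_int m > (-1::real)" using bd m a a0b by auto
    then have "m = 0" by linarith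
    then show ?thesis using True m a_def a0_def by simp
  next
    case False
    then have "of_int m < (2::real)" "of_int m > (0::real)" using bd m a a0b by auto
    then have "m = 1" by linarith
    then show ?thesis using False m a_def a0_def by simp
  qed
qed

lemma euler_lemma:
  assumes "homeo_plus f" "homeo_plus g" "homeo_plus h" "\<And>z. z \<in> S1 \<Longrightarrow> f (g z) = h z"
  shows "circle_lift h (x + of_int (euler_cocycle f g)) = circle_lift f (circle_lift g x)"
proof -
  have gf: "good f" and gg: "good g" and gh: "good h" using assms homeo_plus_props(1) by auto
  have eqc: "circle_lift (f \<circ> g) = circle_lift h" by (rule circle_lift_cong) (use assms(4) in auto)
  have Lf: "islift f (circle_lift f)" and Lg: "islift g (circle_lift g)" and Lh: "islift h (circle_lift h)"
    using circle_lift_props(1) gf gg gh by auto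
  have "islift h (\<lambda>x. circle_lift f (circle_lift g x))"
    unfolding islift_def
  proof
    show "continuous_on UNIV (\<lambda>x. circle_lift f (circle_lift g x))"
      using Lf Lg unfolding islift_def by (metis continuous_on_compose2 subset_UNIV)
    show "\<forall>x. h (ecirc x) = ecirc (circle_lift f (circle_lift g x))"
      using Lf Lg assms(4) ecirc_in unfolding islift_def by metis
  qed
  then obtain n :: int where n: "\<And>x. circle_lift f (circle_lift g x) = circle_lift h x + of_int n"
    using lift_diff[OF Lh] by blast
  have "euler_cocycle f g = n"
    unfolding euler_cocycle_def eqc
  proof (rule the_equality)
    show "\<forall>x. circle_lift h (x + of_int n) = circle_lift f (circle_lift g x)"
      using n cl_shift[OF assms(3)] by simp
  next
    fix c :: int assume "\<forall>x. circle_lift h (x + of_int c) = circle_lift f (circle_lift g x)"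
    then have "circle_lift h (0 + of_int c) = circle_lift f (circle_lift g 0)" by blast
    then have "circle_lift h 0 + of_int c = circle_lift h 0 + of_int n"
      using n[of 0] cl_shift[OF assms(3), of 0 c] by simp
    then show "c = n" by simp
  qed
  then show ?thesis using n cl_shift[OF assms(3)] by simp
qed



theorem lemma4p3:
  fixes \<rho>0 \<rho>1 :: "'g::{topological_group_add, t2_space, second_countable_topology} \<Rightarrow> complex \<Rightarrow> complex"
    and \<phi> :: "complex \<Rightarrow> complex" and k :: int
  assumes "locally_compact_space (euclidean :: 'g topology)"
    and "cont_action \<rho>0" and "cont_action \<rho>1"
    and "covering_space S1 \<phi> S1" and "circle_degree \<phi> = k"
    and "\<forall>g. \<forall>x\<in>S1. \<rho>0 g (\<phi> x) = \<phi> (\<rho>1 g x)"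
  shows "same_bc_class (pullback_euler \<rho>0) (\<lambda>g h. k * pullback_euler \<rho>1 g h)"
proof -
  have hp0: "\<And>g. homeo_plus (\<rho>0 g)" and hp1: "\<And>g. homeo_plus (\<rho>1 g)"
    and act0: "\<And>g h z. z \<in> S1 \<Longrightarrow> \<rho>0 (g + h) z = \<rho>0 g (\<rho>0 h z)"
    and act1: "\<And>g h z. z \<in> S1 \<Longrightarrow> \<rho>1 (g + h) z = \<rho>1 g (\<rho>1 h z)"
    and cont0: "continuous_on (UNIV \<times> S1) (\<lambda>(g, x). \<rho>0 g x)"
    and cont1: "continuous_on (UNIV \<times> S1) (\<lambda>(g, x). \<rho>1 g x)"
    using assms(2,3) unfolding cont_action_def by auto
  have gphi: "good \<phi>" unfolding good_def
    using covering_space_imp_continuous[OF assms(4)] covering_space_imp_surjective[OF assms(4)] by auto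
  obtain \<Phi>0 where L0: "islift \<phi> \<Phi>0" using lift_exists gphi good_def by blast
  define \<Phi> where "\<Phi> x = \<Phi>0 x - of_int \<lfloor>\<Phi>0 0\<rfloor>" for x
  have L\<Phi>: "islift \<phi> \<Phi>" using L0 unfolding islift_def \<Phi>_def
    by (auto intro!: continuous_intros simp: ecirc_add_int[of _ "- \<lfloor>\<Phi>0 0\<rfloor>", simplified])
  have t01: "0 \<le> \<Phi> 0" "\<Phi> 0 < 1" unfolding \<Phi>_def by linarith+
  have c\<Phi>: "continuous_on UNIV \<Phi>" using L\<Phi> islift_def by blast
  have \<Phi>shift: "\<And>x c. \<Phi> (x + of_int c) = \<Phi> x + of_int k * of_int c"
    using shift_int[of \<Phi> k] lift_degree[OF L\<Phi>] assms(5) by simp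
  define A where "A g = circle_lift (\<rho>0 g)" for g
  define B where "B g = circle_lift (\<rho>1 g)" for g
  have LA: "islift (\<rho>0 g) (A g)" for g
    unfolding A_def using circle_lift_props(1) homeo_plus_props(1) hp0 by blast
  have LB: "islift (\<rho>1 g) (B g)" for g
    unfolding B_def using circle_lift_props(1) homeo_plus_props(1) hp1 by blast
  have bex: "\<exists>n::int. \<forall>x. A g (\<Phi> x) = \<Phi> (B g x) + of_int n" for g
  proof (rule lift_diff)
    show "islift (\<lambda>z. \<phi> (\<rho>1 g z)) (\<lambda>x. \<Phi> (B g x))"
      unfolding islift_def
    proof
      show "continuous_on UNIV (\<lambda>x. \<Phi> (B g x))"
        using c\<Phi> LB[of g] unfolding islift_def by (metis continuous_on_compose2 subset_UNIV)
      show "\<forall>x. \<phi> (\<rho>1 g (ecirc x)) = ecirc (\<Phi> (B g x))"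
        using L\<Phi> LB[of g] unfolding islift_def by metis
    qed
    show "islift (\<lambda>z. \<phi> (\<rho>1 g z)) (\<lambda>x. A g (\<Phi> x))"
      unfolding islift_def
    proof
      show "continuous_on UNIV (\<lambda>x. A g (\<Phi> x))"
        using c\<Phi> LA[of g] unfolding islift_def by (metis continuous_on_compose2 subset_UNIV)
      show "\<forall>x. \<phi> (\<rho>1 g (ecirc x)) = ecirc (A g (\<Phi> x))"
        using L\<Phi> LA[of g] assms(6) ecirc_in unfolding islift_def by metis
    qed
  qed
  define b where "b g = \<lfloor>A g (\<Phi> 0) - \<Phi> (B g 0)\<rfloor>" for g
  have bprop: "A g (\<Phi> x) = \<Phi> (B g x) + of_int (b g)" for g x
  proof -
    obtain n :: int where n: "\<And>x. A g (\<Phi> x) = \<Phi> (B g x) + of_int n" using bex by blast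
    then have "b g = n" unfolding b_def by simp
    then show ?thesis using n by simp
  qed
  have sh0: "A g (x + of_int c) = A g x + of_int c" for g x c
    unfolding A_def using cl_shift hp0 by blast
  have sh1: "B g (x + of_int c) = B g x + of_int c" for g x c
    unfolding B_def using cl_shift hp1 by blast
  show ?thesis unfolding same_bc_class_def
  proof (intro exI[of _ b] conjI allI)
    fix g h
    define c0 where "c0 = pullback_euler \<rho>0 g h"
    define c1 where "c1 = pullback_euler \<rho>1 g h"
    have e0: "A (g + h) (x + of_int c0) = A g (A h x)" for x
      unfolding A_def c0_def pullback_euler_def
      by (rule euler_lemma[OF hp0 hp0 hp0]) (simp add: act0)
    have e1: "B (g + h) (x + of_int c1) = B g (B h x)" for x
      unfolding B_def c1_def pullback_euler_def
      by (rule euler_lemma[OF hp1 hp1 hp1]) (simp add: act1)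
    have "A g (A h (\<Phi> 0)) = A g (\<Phi> (B h 0) + of_int (b h))" using bprop by simp
    also have "\<dots> = A g (\<Phi> (B h 0)) + of_int (b h)" by (rule sh0)
    also have "\<dots> = \<Phi> (B g (B h 0)) + of_int (b g) + of_int (b h)" using bprop by simp
    also have "\<dots> = \<Phi> (B (g + h) (0 + of_int c1)) + of_int (b g) + of_int (b h)" using e1[of 0] by simp
    also have "\<dots> = \<Phi> (B (g + h) 0) + of_int k * of_int c1 + of_int (b g) + of_int (b h)"
      using sh1[of "g + h" 0 c1] \<Phi>shift[of "B (g + h) 0" c1] by simp
    finally have r1: "A g (A h (\<Phi> 0)) = \<Phi> (B (g + h) 0) + of_int k * of_int c1 + of_int (b g) + of_int (b h)" .
    have "A g (A h (\<Phi> 0)) = A (g + h) (\<Phi> 0 + of_int c0)" using e0 by simp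
    also have "\<dots> = \<Phi> (B (g + h) 0) + of_int (b (g + h)) + of_int c0" using sh0 bprop by simp
    finally have "real_of_int (b (g + h) + c0) = real_of_int (k * c1 + b g + b h)" using r1 by simp
    then have "b (g + h) + c0 = k * c1 + b g + b h" by (simp only: of_int_eq_iff)
    then show "pullback_euler \<rho>0 g h - k * pullback_euler \<rho>1 g h = b g + b h - b (g + h)"
      unfolding c0_def c1_def by simp
  next
    let ?t = "\<Phi> 0"
    have ctg: "continuous_on UNIV (\<lambda>g. \<rho> g z)" 
      if "continuous_on (UNIV \<times> S1) (\<lambda>(g, x). \<rho> g x)" "z \<in> S1" for \<rho> :: "'g \<Rightarrow> complex \<Rightarrow> complex" and z
    proof -
      have "continuous_on UNIV (\<lambda>g. (\<lambda>(g, x). \<rho> g x) (g, z))"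
        by (rule continuous_on_compose2[OF that(1)]) (use that(2) in \<open>auto intro: continuous_intros\<close>)
      then show ?thesis by simp
    qed
    have mg: "(\<lambda>g. ang (\<rho> g z)) \<in> borel_measurable borel"
      if "continuous_on (UNIV \<times> S1) (\<lambda>(g, x). \<rho> g x)" "z \<in> S1" for \<rho> :: "'g \<Rightarrow> complex \<Rightarrow> complex" and z
      using measurable_compose[OF borel_measurable_continuous_onI[OF ctg[OF that]] ang_meas] by (simp add: o_def)
    have one: "(1::complex) \<in> S1" by simp
    have m1: "(\<lambda>g. ang (\<rho>0 g 1)) \<in> borel_measurable borel" by (rule mg[OF cont0 one])
    have m2: "(\<lambda>g. ang (\<rho>0 g (ecirc ?t))) \<in> borel_measurable borel" by (rule mg[OF cont0 ecirc_in])
    have m3: "(\<lambda>g. ang (\<rho>1 g 1)) \<in> borel_measurable borel" by (rule mg[OF cont1 one])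
    have beq: "real_of_int (b g) = (if ang (\<rho>0 g 1) \<le> ang (\<rho>0 g (ecirc ?t)) then ang (\<rho>0 g (ecirc ?t))
         else ang (\<rho>0 g (ecirc ?t)) + 1) - \<Phi> (ang (\<rho>1 g 1))" for g
    proof -
      have "real_of_int (b g) = A g ?t - \<Phi> (B g 0)" using bprop[of g 0] by simp
      moreover have "A g ?t = (if ang (\<rho>0 g 1) \<le> ang (\<rho>0 g (ecirc ?t)) then ang (\<rho>0 g (ecirc ?t))
         else ang (\<rho>0 g (ecirc ?t)) + 1)" unfolding A_def by (rule lift_t[OF hp0 t01])
      moreover have "B g 0 = ang (\<rho>1 g 1)" unfolding B_def
        using lift0 homeo_plus_props(1) hp1 by blast
      ultimately show ?thesis by simp
    qed
    have meas: "(\<lambda>g. real_of_int (b g)) \<in> borel_measurable borel"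
      unfolding beq
      by (intro borel_measurable_diff measurable_If borel_measurable_add m1 m2 m3 borel_measurable_le
          borel_measurable_const borel_measurable_continuous_on[OF c\<Phi>])
    have "compact (\<Phi> ` {0..1})" by (rule compact_continuous_image) (use c\<Phi> continuous_on_subset in auto)
    then obtain M where M: "\<And>y. y \<in> {0..1} \<Longrightarrow> \<bar>\<Phi> y\<bar> \<le> M"
      using compact_imp_bounded bounded_real by (metis imageI)
    have bnd: "\<bar>b g\<bar> \<le> \<lceil>2 + M\<rceil>" for g
    proof -
      have h0: "good (\<rho>0 g)" "good (\<rho>1 g)" using homeo_plus_props(1) hp0 hp1 by auto
      have "A g 0 \<le> A g ?t" "A g ?t < A g 0 + 1" using cl_bound[OF hp0 t01] unfolding A_def by auto
      moreover have "0 \<le> A g 0" "A g 0 < 1" using circle_lift_props(2,3)[OF h0(1)] A_def by auto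
      moreover have "0 \<le> B g 0" "B g 0 < 1" using circle_lift_props(2,3)[OF h0(2)] B_def by auto
      moreover have "real_of_int (b g) = A g ?t - \<Phi> (B g 0)" using bprop[of g 0] by simp
      ultimately have "real_of_int \<bar>b g\<bar> \<le> 2 + M" using M[of "B g 0"] by auto
      also have "\<dots> \<le> of_int \<lceil>2 + M\<rceil>" by (rule le_of_int_ceiling)
      finally show ?thesis by (simp only: of_int_le_iff)
    qed
    show "bounded_borel_int b" unfolding bounded_borel_int_def using meas bnd by blast
  qed
qed


end
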